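(* Let $\mathbb{D}=\{z\in\mathbb{C}:|z|<1\}$. For $\beta\in(1,\tfrac{11}{8}]$ let $$\mathcal{P}(\beta)=\Big\{f=h+\overline{g}\in\mathcal{H}:\ g'(z)=zh'(z)\ \text{and}\ \operatorname{Re}\Big(1+\frac{zh''(z)}{h'(z)}\Big)<\beta\ \text{for all } z\in\mathbb{D}\Big\}.$$ Then for every $\beta\in(1,\tfrac{11}{8}]$ the class $\mathcal{P}(\beta)$ contains a function that is not univalent in $\mathbb{D}$. More precisely, for each $\gamma\in(1,\tfrac74]$ the harmonic function $f_\gamma=h+\overline{g}$ with $$h(z)=\frac{1}{\gamma}\big[1-(1-z)^{\gamma}\big],\qquad g(z)=\frac{1}{\gamma(1+\gamma)}\big[1-(1+\gamma z)(1-z)^{\gamma}\big]$$ (principal branches) belongs to $\mathcal{P}((1+\gamma)/2)$, hence to $\mathcal{P}(\beta)$ for every $\beta\ge(1+\gamma)/2$, and $f_\gamma$ is not univalent in $\mathbb{D}$.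
   Context: $\mathcal{H}$ denotes the class of complex-valued harmonic functions $f=h+\overline{g}$ on $\mathbb{D}$, with $h,g$ analytic in $\mathbb{D}$, normalized by $f(0)=0$ and $f_z(0)=1$, i.e. $f(z)=z+\sum_{k\ge2}a_kz^k+\overline{\sum_{k\ge1}b_kz^k}$. *)

theory Defs
  imports "HOL-Analysis.Analysis"
begin

abbreviation unit_disc :: "complex set" where
  "unit_disc \<equiv> ball 0 1"

text \<open>Membership in the class P(beta): f = h + conj g on the unit disc with h, g analytic,
  normalised as in the class H (h(0) = g(0) = 0, h'(0) = 1), g' = z h', and
  Re(1 + z h''/h') < beta on the disc (the quotient being defined, i.e. h' nonzero).\<close>
definition classP :: "real \<Rightarrow> (complex \<Rightarrow> complex) set" where
  "classP \<beta> = {f. \<exists>h g. h holomorphic_on unit_disc \<and> g holomorphic_on unit_disc \<and>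
      (\<forall>z\<in>unit_disc. f z = h z + cnj (g z)) \<and>
      h 0 = 0 \<and> g 0 = 0 \<and> deriv h 0 = 1 \<and>
      (\<forall>z\<in>unit_disc. deriv g z = z * deriv h z) \<and>
      (\<forall>z\<in>unit_disc. deriv h z \<noteq> 0 \<and>
           Re (1 + z * deriv (deriv h) z / deriv h z) < \<beta>)}"

definition h_gamma :: "real \<Rightarrow> complex \<Rightarrow> complex" where
  "h_gamma \<gamma> z = (1 - (1 - z) powr complex_of_real \<gamma>) / complex_of_real \<gamma>"

definition g_gamma :: "real \<Rightarrow> complex \<Rightarrow> complex" where
  "g_gamma \<gamma> z = (1 - (1 + complex_of_real \<gamma> * z) * (1 - z) powr complex_of_real \<gamma>)
                   / complex_of_real (\<gamma> * (1 + \<gamma>))"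

definition f_gamma :: "real \<Rightarrow> complex \<Rightarrow> complex" where
  "f_gamma \<gamma> z = h_gamma \<gamma> z + cnj (g_gamma \<gamma> z)"

end

theory Submission
  imports Defs
begin

lemma powr_plus1: "(w::complex) \<noteq> 0 \<Longrightarrow> w powr (c + 1) = w powr c * w"
  by (simp add: powr_def distrib_right exp_add)

lemma notneg: "Re z < 1 \<Longrightarrow> 1 - z \<notin> \<real>\<^sub>\<le>\<^sub>0"
  by (auto simp: complex_nonpos_Reals_iff)

lemma pow_deriv:
  assumes "Re z < 1"
  shows "((\<lambda>z. (1 - z) powr s) has_field_derivative - (s * (1 - z) powr (s - 1))) (at z)"
proof -
  show ?thesis using notneg[OF assms]
    by (auto intro!: derivative_eq_intros)
qed

lemma h_deriv:
  assumes "Re z < 1" "\<gamma> \<noteq> 0"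
  shows "(h_gamma \<gamma> has_field_derivative (1 - z) powr (complex_of_real \<gamma> - 1)) (at z)"
proof -
  have "((\<lambda>z. (1 - (1 - z) powr complex_of_real \<gamma>) / complex_of_real \<gamma>) has_field_derivative
        (0 - (- (complex_of_real \<gamma> * (1 - z) powr (complex_of_real \<gamma> - 1)))) / complex_of_real \<gamma>) (at z)"
    by (intro derivative_eq_intros) (use notneg[OF assms(1)] assms in auto)
  then show ?thesis using assms(2) unfolding h_gamma_def[abs_def] by simp
qed

lemma g_deriv:
  assumes "Re z < 1" "\<gamma> \<noteq> 0" "\<gamma> \<noteq> -1"
  shows "(g_gamma \<gamma> has_field_derivative z * (1 - z) powr (complex_of_real \<gamma> - 1)) (at z)"
proof -
  let ?g = "complex_of_real \<gamma>"
  let ?P = "(1 - z) powr (?g - 1)"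
  have c1: "1 + ?g \<noteq> 0"
  proof
    assume "1 + ?g = 0"
    then have "Re (1 + ?g) = 0" by simp
    then show False using assms(3) by simp
  qed
  have D: "((\<lambda>z. (1 - (1 + ?g * z) * (1 - z) powr ?g) / complex_of_real (\<gamma> * (1 + \<gamma>))) has_field_derivative
        (0 - ((0 + ?g * 1) * (1 - z) powr ?g + (1 + ?g * z) * (- (?g * ?P)))) / complex_of_real (\<gamma> * (1 + \<gamma>))) (at z)"
    by (intro derivative_eq_intros) (use notneg[OF assms(1)] assms c1 in auto)
  have E: "(1 - z) powr ?g = ?P * (1 - z)"
  proof -
    have "z \<noteq> 1" using assms(1) by auto
    then have "(1 - z) powr ((?g - 1) + 1) = ?P * (1 - z)" by (intro powr_plus1) auto
    then show ?thesis by simp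
  qed
  have nz: "complex_of_real (\<gamma> * (1 + \<gamma>)) = ?g * (1 + ?g)" by simp
  have "(0 - ((0 + ?g * 1) * (1 - z) powr ?g + (1 + ?g * z) * (- (?g * ?P)))) / complex_of_real (\<gamma> * (1 + \<gamma>))
      = (?g * (1 + ?g)) * (z * ?P) / (?g * (1 + ?g))"
    unfolding E nz by (simp add: algebra_simps)
  also have "\<dots> = z * ?P" using assms(2) c1 by simp
  finally have V: "(0 - ((0 + ?g * 1) * (1 - z) powr ?g + (1 + ?g * z) * (- (?g * ?P)))) / complex_of_real (\<gamma> * (1 + \<gamma>)) = z * ?P" .
  show ?thesis using D unfolding V g_gamma_def[abs_def] .
qed


lemma Re_bound:
  assumes "norm z < 1"
  shows "Re (z / (1 - z)) > - 1/2"
proof -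
  let ?x = "Re z" and ?y = "Im z"
  have n: "?x^2 + ?y^2 < 1" using assms by (simp add: cmod_def)
  have x1: "?x < 1" using complex_Re_le_cmod[of z] assms by simp
  have d: "(1 - ?x)^2 + ?y^2 > 0" using x1 by (smt (verit) zero_less_power2 sum_power2_gt_zero_iff)
  have "Re (z / (1 - z)) = (?x * (1 - ?x) + ?y * (- ?y)) / ((1 - ?x)^2 + ?y^2)"
    by (simp add: Re_divide)
  also have "\<dots> > - 1/2" using d n
    by (simp add: less_divide_eq power2_eq_square algebra_simps)
  finally show ?thesis .
qed

lemma in_P:
  assumes g1: "1 < \<gamma>" and b: "(1 + \<gamma>) / 2 \<le> \<beta>"
  shows "f_gamma \<gamma> \<in> classP \<beta>"
proof -
  let ?g = "complex_of_real \<gamma>"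
  let ?H = "{z::complex. Re z < 1}"
  have oH: "open ?H" by (rule open_halfspace_Re_lt)
  have sub: "z \<in> ?H" if "z \<in> unit_disc" for z
    using that complex_Re_le_cmod[of z] by auto
  have g0: "\<gamma> \<noteq> 0" "\<gamma> \<noteq> -1" using g1 by auto
  have dh: "deriv (h_gamma \<gamma>) z = (1 - z) powr (?g - 1)" if "z \<in> ?H" for z
    using h_deriv[OF _ g0(1)] that by (auto intro: DERIV_imp_deriv)
  have dg: "deriv (g_gamma \<gamma>) z = z * (1 - z) powr (?g - 1)" if "z \<in> ?H" for z
    using g_deriv[OF _ g0] that by (auto intro: DERIV_imp_deriv)
  have ddh: "deriv (deriv (h_gamma \<gamma>)) z = - ((?g - 1) * (1 - z) powr (?g - 1 - 1))" if "z \<in> ?H" for z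
  proof -
    have "deriv (deriv (h_gamma \<gamma>)) z = deriv (\<lambda>z. (1 - z) powr (?g - 1)) z"
      by (rule deriv_cong_ev[OF _ refl]) (use eventually_nhds_in_open[OF oH that] dh in \<open>auto elim: eventually_mono\<close>)
    also have "\<dots> = - ((?g - 1) * (1 - z) powr (?g - 1 - 1))"
      using pow_deriv[of z "?g - 1"] that by (auto intro: DERIV_imp_deriv)
    finally show ?thesis .
  qed
  have hol_h: "h_gamma \<gamma> holomorphic_on unit_disc"
    using h_deriv[OF _ g0(1)] sub unfolding holomorphic_on_open[OF open_ball] by (metis mem_Collect_eq)
  have hol_g: "g_gamma \<gamma> holomorphic_on unit_disc"
    using g_deriv[OF _ g0] sub unfolding holomorphic_on_open[OF open_ball] by (metis mem_Collect_eq)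
  have main: "deriv (h_gamma \<gamma>) z \<noteq> 0 \<and> Re (1 + z * deriv (deriv (h_gamma \<gamma>)) z / deriv (h_gamma \<gamma>) z) < \<beta>"
    if z: "z \<in> unit_disc" for z
  proof -
    have zH: "z \<in> ?H" using sub[OF z] .
    have z1: "1 - z \<noteq> 0" using zH by auto
    let ?Q = "(1 - z) powr (?g - 1 - 1)"
    have E: "(1 - z) powr (?g - 1) = ?Q * (1 - z)"
      using powr_plus1[OF z1, of "?g - 1 - 1"] by simp
    have Qnz: "?Q \<noteq> 0" using z1 by simp
    have "z * deriv (deriv (h_gamma \<gamma>)) z / deriv (h_gamma \<gamma>) z = complex_of_real (1 - \<gamma>) * (z / (1 - z))"
      unfolding dh[OF zH] ddh[OF zH] E using Qnz z1 by (simp add: field_simps)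
    moreover have "Re (1 + complex_of_real (1 - \<gamma>) * (z / (1 - z))) = 1 - (\<gamma> - 1) * Re (z / (1 - z))"
      by (simp only: plus_complex.sel one_complex.sel times_complex.sel Re_complex_of_real Im_complex_of_real) (simp add: algebra_simps)
    ultimately have "Re (1 + z * deriv (deriv (h_gamma \<gamma>)) z / deriv (h_gamma \<gamma>) z) = 1 - (\<gamma> - 1) * Re (z / (1 - z))"
      by simp
    also have "\<dots> < 1 + (\<gamma> - 1) / 2"
    proof -
      have R: "- 1/2 < Re (z / (1 - z))" using Re_bound[of z] z by simp
      have "(\<gamma> - 1) * (- 1/2) < (\<gamma> - 1) * Re (z / (1 - z))"
        by (rule mult_strict_left_mono[OF R]) (use g1 in simp)
      then show ?thesis by linarith
    qed
    also have "\<dots> \<le> \<beta>" using b by (simp add: field_simps)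
    finally show ?thesis using dh[OF zH] z1 by simp
  qed
  show ?thesis unfolding classP_def
  proof (rule CollectI, rule exI[of _ "h_gamma \<gamma>"], rule exI[of _ "g_gamma \<gamma>"], intro conjI ballI)
    show "deriv (h_gamma \<gamma>) 0 = 1" using dh[of 0] by simp
    show "h_gamma \<gamma> 0 = 0" by (simp add: h_gamma_def)
    show "g_gamma \<gamma> 0 = 0" by (simp add: g_gamma_def)
    fix z :: complex assume z: "z \<in> unit_disc"
    show "f_gamma \<gamma> z = h_gamma \<gamma> z + cnj (g_gamma \<gamma> z)" by (simp add: f_gamma_def)
    show "deriv (g_gamma \<gamma>) z = z * deriv (h_gamma \<gamma>) z" using dg[OF sub[OF z]] dh[OF sub[OF z]] by simp
    show "deriv (h_gamma \<gamma>) z \<noteq> 0" "Re (1 + z * deriv (deriv (h_gamma \<gamma>)) z / deriv (h_gamma \<gamma>) z) < \<beta>"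
      using main[OF z] by auto
  qed (use hol_h hol_g in auto)
qed


lemma alg0:
  fixes a b v w g :: complex
  assumes "g \<noteq> 0" "1 + g \<noteq> 0" "v * b = w * a"
  shows "(1 - a) / g + (1 - (1 + g * (1 - v)) * b) / (g * (1 + g))
       = (1 - b) / g + (1 - (1 + g * (1 - w)) * a) / (g * (1 + g))"
proof -
  have e1: "(1 - a) / g = (1 - a) * (1 + g) / (g * (1 + g))" using assms(2) by simp
  have e2: "(1 - b) / g = (1 - b) * (1 + g) / (g * (1 + g))" using assms(2) by simp
  have N: "(1 - a) * (1 + g) + (1 - (1 + g * (1 - v)) * b) = (1 - b) * (1 + g) + (1 - (1 + g * (1 - w)) * a)"
  proof -
    have "(1 - a) * (1 + g) + (1 - (1 + g * (1 - v)) * b) - ((1 - b) * (1 + g) + (1 - (1 + g * (1 - w)) * a))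
        = g * (v * b - w * a)" by (simp add: algebra_simps)
    then show ?thesis using assms(3) by (metis diff_self mult_zero_right eq_iff_diff_eq_0)
  qed
  show ?thesis unfolding e1 e2 add_divide_distrib[symmetric] N ..
qed

lemma alg:
  fixes a w :: complex and \<gamma> :: real
  assumes "\<gamma> \<noteq> 0" "1 + complex_of_real \<gamma> \<noteq> 0" "cnj w * cnj a = w * a"
  shows "(1 - a) / complex_of_real \<gamma> + cnj ((1 - (1 + complex_of_real \<gamma> * (1 - w)) * a) / complex_of_real (\<gamma> * (1 + \<gamma>)))
       = (1 - cnj a) / complex_of_real \<gamma> + cnj ((1 - (1 + complex_of_real \<gamma> * (1 - cnj w)) * cnj a) / complex_of_real (\<gamma> * (1 + \<gamma>)))"
proof -
  let ?g = "complex_of_real \<gamma>"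
  have e: "complex_of_real (\<gamma> * (1 + \<gamma>)) = ?g * (1 + ?g)" by simp
  have "cnj ((1 - (1 + ?g * (1 - w)) * a) / (?g * (1 + ?g))) = (1 - (1 + ?g * (1 - cnj w)) * cnj a) / (?g * (1 + ?g))"
    by simp
  moreover have "cnj ((1 - (1 + ?g * (1 - cnj w)) * cnj a) / (?g * (1 + ?g))) = (1 - (1 + ?g * (1 - w)) * a) / (?g * (1 + ?g))"
    by simp
  ultimately show ?thesis unfolding e using alg0[of ?g "cnj w" "cnj a" w a] assms by simp
qed

lemma not_inj:
  assumes g1: "1 < \<gamma>"
  shows "\<not> inj_on (f_gamma \<gamma>) unit_disc"
proof -
  let ?g = "complex_of_real \<gamma>"
  define \<theta> where "\<theta> = pi / (1 + \<gamma>)"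
  define r where "r = cos \<theta>"
  define L where "L = complex_of_real (ln r) + \<i> * complex_of_real \<theta>"
  define w where "w = exp L"
  have th0: "0 < \<theta>" using g1 by (simp add: \<theta>_def)
  have th1: "\<theta> < pi / 2" using g1 pi_gt_zero unfolding \<theta>_def by (simp add: field_simps)
  have r0: "0 < r" unfolding r_def using th0 th1 by (intro cos_gt_zero) auto
  have s0: "0 < sin \<theta>" using th0 th1 by (intro sin_gt_zero) auto
  have ReL: "Re L = ln r" and ImL: "Im L = \<theta>" by (simp_all add: L_def)
  have Rew: "Re w = r * cos \<theta>" and Imw: "Im w = r * sin \<theta>"
    using r0 by (simp_all add: w_def Re_exp Im_exp ReL ImL)
  have w0: "w \<noteq> 0" by (simp add: w_def)
  have LnL: "Ln w = L" unfolding w_def using th0 th1 pi_gt_zero by (intro Ln_exp) (auto simp: ImL)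
  have LnLc: "Ln (cnj w) = cnj L" unfolding w_def exp_cnj using th0 th1 pi_gt_zero by (intro Ln_exp) (auto simp: ImL)
  define a where "a = exp (?g * L)"
  have pa: "w powr ?g = a" using w0 by (simp add: powr_def LnL a_def)
  have pac: "cnj w powr ?g = cnj a" using w0 by (simp add: powr_def LnLc a_def exp_cnj)
  have wa: "w * a = exp ((1 + ?g) * L)" by (simp add: w_def a_def flip: exp_add) (simp add: algebra_simps)
  have Imwa: "Im (w * a) = 0"
  proof -
    have "Im ((1 + ?g) * L) = pi" using g1 by (simp add: ImL ReL \<theta>_def)
    then show ?thesis unfolding wa Im_exp by simp
  qed
  have cwa: "cnj w * cnj a = w * a"
    using Imwa by (simp add: complex_eq_iff flip: complex_cnj_mult)
  define z1 where "z1 = 1 - w"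
  define z2 where "z2 = 1 - cnj w"
  have nz1: "norm z1 < 1"
  proof -
    have "(norm z1)^2 = (1 - r * cos \<theta>)^2 + (r * sin \<theta>)^2"
      by (simp add: z1_def cmod_power2 Rew Imw)
    also have "\<dots> = 1 - r^2" unfolding r_def
        unfolding power_mult_distrib sin_squared_eq by (simp add: power2_eq_square algebra_simps)
    also have "\<dots> < 1" using r0 by simp
    finally show ?thesis by (simp add: power_less_one_iff)
  qed
  have nz2: "norm z2 < 1"
  proof -
    have "norm z2 = norm (cnj z1)" by (simp add: z1_def z2_def)
    then show ?thesis using nz1 by simp
  qed
  have ne: "z1 \<noteq> z2"
  proof
    assume "z1 = z2"
    then have "Im z1 = Im z2" by simp
    then have "r * sin \<theta> = 0" by (simp add: z1_def z2_def Imw)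
    then show False using r0 s0 by simp
  qed
  have c1: "1 + ?g \<noteq> 0"
  proof
    assume "1 + ?g = 0"
    then have "Re (1 + ?g) = 0" by simp
    then show False using g1 by simp
  qed
  have "f_gamma \<gamma> z1 = f_gamma \<gamma> z2"
    unfolding f_gamma_def h_gamma_def g_gamma_def
    using alg[OF _ c1 cwa] g1 by (simp add: z1_def z2_def pa pac)
  then show ?thesis using nz1 nz2 ne unfolding inj_on_def by (metis mem_ball_0)
qed

theorem mainTheorem1:
  shows "(\<forall>\<beta>::real. 1 < \<beta> \<and> \<beta> \<le> 11/8 \<longrightarrow>
            (\<exists>f\<in>classP \<beta>. \<not> inj_on f unit_disc)) \<and>
         (\<forall>\<gamma>::real. 1 < \<gamma> \<and> \<gamma> \<le> 7/4 \<longrightarrow>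
            (\<forall>\<beta>::real. (1 + \<gamma>) / 2 \<le> \<beta> \<longrightarrow> f_gamma \<gamma> \<in> classP \<beta>) \<and>
            \<not> inj_on (f_gamma \<gamma>) unit_disc)"
proof (intro conjI allI impI)
  fix \<beta> :: real assume b: "1 < \<beta> \<and> \<beta> \<le> 11/8"
  have "f_gamma (2 * \<beta> - 1) \<in> classP \<beta>" using b by (intro in_P) auto
  moreover have "\<not> inj_on (f_gamma (2 * \<beta> - 1)) unit_disc" using b by (intro not_inj) auto
  ultimately show "\<exists>f\<in>classP \<beta>. \<not> inj_on f unit_disc" by blast
next
  fix \<gamma> \<beta> :: real assume "1 < \<gamma> \<and> \<gamma> \<le> 7/4" "(1 + \<gamma>) / 2 \<le> \<beta>"
  then show "f_gamma \<gamma> \<in> classP \<beta>" by (intro in_P) auto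
next
  fix \<gamma> :: real assume "1 < \<gamma> \<and> \<gamma> \<le> 7/4"
  then show "\<not> inj_on (f_gamma \<gamma>) unit_disc" by (intro not_inj) auto
qed

end
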